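(* Let $U(0)\geqslant 1$ and $d\geqslant 1$ be integers, $U(n)=U(0)+nd$, and let $S(n)=\overline{U(n)U(n-1)\cdots U(0)}$ (left-concatenation), so $S(0)=U(0)$. Let $n\geqslant 0$ and put $$l=\left\lceil \log_{10}(n d + S(0) + 1)\right\rceil,\qquad t_l=\left\lfloor \frac{10^{l-1}-S(0)}{d}\right\rfloor .$$ Assume $t_l\geqslant 0$ and $U(t_l+2)<10^l$. Let $p_l$ be the number of decimal digits of $S(t_l)$, let $s_0=S(t_l)$, $s_1=S(t_l+1)$, $s_2=S(t_l+2)$, and $$\alpha_l=\frac{s_2-2\cdot 10^l s_1+10^{2l}s_0}{(10^l-1)^2},\qquad \mu_l=\frac{\left((10^l-1)U(t_l)-d\right)10^{p_l}}{(10^l-1)^2},\qquad \theta_l=\frac{d\cdot 10^{p_l}}{10^l-1}.$$ Then $$S(n)=\alpha_l+\mu_l\,10^{l(n-t_l)}+\theta_l\,(n-t_l)\,10^{l(n-t_l)}.$$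
   Context: For positive integers $a_0,\ldots,a_k$, $\overline{a_0a_1\cdots a_k}$ denotes the integer whose decimal expansion is the decimal expansion of $a_0$ followed by that of $a_1$, ..., followed by that of $a_k$. Note $l$ is the number of decimal digits of $U(n)$. *)

theory Defs
  imports Complex_Main
begin

fun ndigits :: "nat \<Rightarrow> nat" where
  "ndigits x = (if x < 10 then 1 else 1 + ndigits (x div 10))"

definition dconcat :: "nat \<Rightarrow> nat \<Rightarrow> nat" where
  "dconcat a b = a * 10 ^ ndigits b + b"

definition U :: "nat \<Rightarrow> nat \<Rightarrow> nat \<Rightarrow> nat" where
  "U u0 d n = u0 + n * d"

fun S :: "nat \<Rightarrow> nat \<Rightarrow> nat \<Rightarrow> nat" where
  "S u0 d 0 = U u0 d 0"
| "S u0 d (Suc n) = dconcat (U u0 d (Suc n)) (S u0 d n)"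

end

theory Submission
  imports Defs
begin
declare ndigits.simps[simp del]
lemma nd_bounds: "x < 10 ^ ndigits x \<and> (x \<ge> 1 \<longrightarrow> 10 ^ (ndigits x - 1) \<le> x) \<and> ndigits x \<ge> 1"
proof (induction x rule: ndigits.induct)
  case (1 x)
  show ?case
  proof (cases "x < 10")
    case True then show ?thesis by (simp add: ndigits.simps)
  next
    case False
    then have e: "ndigits x = 1 + ndigits (x div 10)" by (simp add: ndigits.simps)
    from 1[OF False] have h: "x div 10 < 10 ^ ndigits (x div 10)" "10 ^ (ndigits (x div 10) - 1) \<le> x div 10" "ndigits (x div 10) \<ge> 1"
      using False by auto
    have "x < 10 * (x div 10 + 1)" by (metis add.commute div_mult_mod_eq mod_less_divisor nat_add_left_cancel_less distrib_left mult.commute mult_1_right zero_less_numeral)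
    also have "\<dots> \<le> 10 * 10 ^ ndigits (x div 10)" using h(1) by simp
    finally have a: "x < 10 ^ ndigits x" by (simp add: e)
    have "10 ^ (ndigits x - 1) = 10 * 10 ^ (ndigits (x div 10) - 1)" using e h(3)
      by (metis add_diff_cancel_left' power_Suc Suc_diff_1 plus_1_eq_Suc le_add1 less_le_trans zero_less_one)
    also have "\<dots> \<le> 10 * (x div 10)" using h(2) by simp
    also have "\<dots> \<le> x" by simp
    finally show ?thesis using a e by simp
  qed
qed

lemma nd_unique: assumes "k \<ge> 1" "10 ^ (k - 1) \<le> x" "x < 10 ^ k" shows "ndigits x = k"
proof -
  have x1: "x \<ge> 1" using assms(2) by (metis le_trans one_le_power nat_le_linear not_one_le_zero one_le_numeral power_0 zero_le)
  from nd_bounds[of x] x1 have b: "x < 10 ^ ndigits x" "10 ^ (ndigits x - 1) \<le> x" "ndigits x \<ge> 1" by auto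
  have "10 ^ (k - 1) < (10::nat) ^ ndigits x" using assms(2) b(1) by linarith
  then have "k - 1 < ndigits x" using power_less_imp_less_exp by (metis one_less_numeral_iff semiring_norm(76))
  moreover have "10 ^ (ndigits x - 1) < (10::nat) ^ k" using assms(3) b(2) by linarith
  then have "ndigits x - 1 < k" using power_less_imp_less_exp by (metis one_less_numeral_iff semiring_norm(76))
  ultimately show ?thesis using assms(1) b(3) by linarith
qed

lemma nd_concat: assumes "a \<ge> 1" shows "ndigits (dconcat a b) = ndigits a + ndigits b"
proof -
  from nd_bounds[of a] assms have ha: "a < 10 ^ ndigits a" "10 ^ (ndigits a - 1) \<le> a" "ndigits a \<ge> 1" by auto
  from nd_bounds[of b] have hb: "b < 10 ^ ndigits b" by auto
  have "10 ^ (ndigits a + ndigits b - 1) = 10 ^ (ndigits a - 1) * (10::nat) ^ ndigits b"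
    using ha(3) by (simp add: power_add[symmetric])
  also have "\<dots> \<le> a * 10 ^ ndigits b" using ha(2) by simp
  also have "\<dots> \<le> dconcat a b" by (simp add: dconcat_def)
  finally have l: "10 ^ (ndigits a + ndigits b - 1) \<le> dconcat a b" .
  have "dconcat a b < a * 10 ^ ndigits b + 10 ^ ndigits b" using hb by (simp add: dconcat_def)
  also have "\<dots> = (a + 1) * 10 ^ ndigits b" by simp
  also have "\<dots> \<le> 10 ^ ndigits a * 10 ^ ndigits b" using ha(1) by (intro mult_right_mono) auto
  finally have u: "dconcat a b < 10 ^ (ndigits a + ndigits b)" by (simp add: power_add)
  show ?thesis using nd_unique[OF _ l u] ha(3) by simp
qed

lemma alg:
  fixes R Sm s0 a d q y x M :: real
  assumes "x - 1 \<noteq> 0" "R = (a + (M + 1) * d) * q * y + Sm"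
    "Sm = (s0 - q * (a * (x - 1) - d) / (x - 1)\<^sup>2) + (q * (a * (x - 1) - d) / (x - 1)\<^sup>2 + d * q / (x - 1) * M) * y"
  shows "R = (s0 - q * (a * (x - 1) - d) / (x - 1)\<^sup>2) + (q * (a * (x - 1) - d) / (x - 1)\<^sup>2 + d * q / (x - 1) * (M + 1)) * (x * y)"
proof -
  have h: "(x - 1)\<^sup>2 \<noteq> 0" using assms(1) by simp
  show ?thesis unfolding assms(2) assms(3) using assms(1) h
    by (simp add: field_simps) algebra
qed

lemma closed:
  fixes u0 d l T m :: nat and x a :: real and p :: nat
  defines "x \<equiv> (10::real) ^ l"
  defines "a \<equiv> real (U u0 d T)"
  defines "p \<equiv> ndigits (S u0 d T)"
  assumes l1: "l \<ge> 1" and lo: "10 ^ (l - 1) < U u0 d (T + 1)" and hi: "U u0 d (T + m) < 10 ^ l"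
  shows "ndigits (S u0 d (T + m)) = p + l * m \<and>
    real (S u0 d (T + m)) = (real (S u0 d T) - 10 ^ p * (a * (x - 1) - d) / (x - 1)\<^sup>2)
      + (10 ^ p * (a * (x - 1) - d) / (x - 1)\<^sup>2 + real d * 10 ^ p / (x - 1) * m) * x ^ m"
  using hi
proof (induction m)
  case 0
  have "(1::real) < 10 ^ l" using l1 by (intro one_less_power) auto
  then have "x \<noteq> 1" unfolding x_def by simp
  then show ?case by (simp add: p_def)
next
  case (Suc m)
  have "(1::real) < 10 ^ l" using l1 by (intro one_less_power) auto
  then have x1: "x - 1 \<noteq> 0" unfolding x_def by simp
  have "U u0 d (T + m) \<le> U u0 d (T + Suc m)" by (simp add: U_def)
  with Suc.prems have IH: "ndigits (S u0 d (T + m)) = p + l * m" and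
    IH2: "real (S u0 d (T + m)) = (real (S u0 d T) - 10 ^ p * (a * (x - 1) - d) / (x - 1)\<^sup>2)
      + (10 ^ p * (a * (x - 1) - d) / (x - 1)\<^sup>2 + real d * 10 ^ p / (x - 1) * m) * x ^ m"
    using Suc.IH by auto
  have "U u0 d (T + 1) \<le> U u0 d (T + Suc m)" by (simp add: U_def)
  then have ulo: "10 ^ (l - 1) \<le> U u0 d (T + Suc m)" "U u0 d (T + Suc m) \<ge> 1" using lo
    by (linarith, metis le_trans less_imp_le_nat one_le_power Suc_leI zero_less_numeral lo le_less_trans not_less le0 dual_order.strict_trans2 less_one)
  have ndU: "ndigits (U u0 d (T + Suc m)) = l" by (rule nd_unique[OF l1 ulo(1) Suc.prems])
  have Seq: "S u0 d (T + Suc m) = dconcat (U u0 d (T + Suc m)) (S u0 d (T + m))" by simp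
  have A: "ndigits (S u0 d (T + Suc m)) = p + l * Suc m"
    unfolding Seq nd_concat[OF ulo(2)] ndU IH by simp
  have "real (S u0 d (T + Suc m)) = real (U u0 d (T + Suc m)) * 10 ^ p * x ^ m + real (S u0 d (T + m))"
    unfolding Seq dconcat_def IH x_def by (simp add: power_add power_mult)
  also have "real (U u0 d (T + Suc m)) = a + (m + 1) * d" unfolding a_def U_def by (simp add: algebra_simps)
  finally have "real (S u0 d (T + Suc m)) = (a + (m + 1) * d) * 10 ^ p * x ^ m + real (S u0 d (T + m))" .
  then have "real (S u0 d (T + Suc m)) = (real (S u0 d T) - 10 ^ p * (a * (x - 1) - d) / (x - 1)\<^sup>2)
      + (10 ^ p * (a * (x - 1) - d) / (x - 1)\<^sup>2 + real d * 10 ^ p / (x - 1) * (real m + 1)) * (x * x ^ m)"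
    by (intro alg[OF x1 _ IH2]) (simp add: algebra_simps)
  then show ?case using A by (simp add: add.commute)
qed

lemma alg2:
  fixes A B C x s0 s1 s2 :: real
  assumes "x - 1 \<noteq> 0" "s0 = A + B" "s1 = A + (B + C) * x" "s2 = A + (B + C * 2) * x ^ 2"
  shows "(s2 - 2 * x * s1 + x ^ 2 * s0) / (x - 1)\<^sup>2 = A"
proof -
  have h: "(x - 1)\<^sup>2 \<noteq> 0" using assms(1) by simp
  have "s2 - 2 * x * s1 + x ^ 2 * s0 = A * (x - 1)\<^sup>2"
    unfolding assms(2-4) by (simp add: power2_eq_square algebra_simps)
  then show ?thesis using h by simp
qed

theorem theorem2:
  fixes u0 d n :: nat and l :: nat and t :: int
  assumes "u0 \<ge> 1" and "d \<ge> 1"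
    and l_def: "l = nat \<lceil>log 10 (real (n * d + S u0 d 0 + 1))\<rceil>"
    and t_def: "t = \<lfloor>(10 ^ (l - 1) - real (S u0 d 0)) / real d\<rfloor>"
    and "t \<ge> 0"
    and "U u0 d (nat t + 2) < 10 ^ l"
  shows "let p = ndigits (S u0 d (nat t));
             s0 = real (S u0 d (nat t));
             s1 = real (S u0 d (nat t + 1));
             s2 = real (S u0 d (nat t + 2));
             \<alpha> = (s2 - 2 * 10 ^ l * s1 + 10 ^ (2 * l) * s0) / (10 ^ l - 1)\<^sup>2;
             \<mu> = ((10 ^ l - 1) * real (U u0 d (nat t)) - real d) * 10 ^ p / (10 ^ l - 1)\<^sup>2;
             \<theta> = real d * 10 ^ p / (10 ^ l - 1)
         in real (S u0 d n) = \<alpha> + \<mu> * (10::real) powi (int l * (int n - t))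
              + \<theta> * (real n - of_int t) * (10::real) powi (int l * (int n - t))"
proof -
  define N where "N = n * d + u0 + 1"
  have S0: "S u0 d 0 = u0" by (simp add: U_def)
  have "N > 1" using assms(1) by (simp add: N_def)
  then have Npos: "real N > 1" by simp
  define c where "c = log 10 (real N)"
  have cpos: "c > 0" unfolding c_def using Npos by (simp del: of_nat_add add: N_def)
  have lc: "l = nat \<lceil>c\<rceil>" using l_def S0 by (simp add: c_def N_def)
  have l1: "l \<ge> 1" using cpos lc by linarith
  have "c \<le> real l" using lc cpos by linarith
  then have "real N \<le> 10 powr real l" unfolding c_def using Npos by (subst (asm) log_le_iff) auto
  then have "real N \<le> 10 ^ l" by (simp add: powr_realpow)
  then have Nhi: "N \<le> 10 ^ l" by (metis of_nat_le_iff of_nat_numeral of_nat_power)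
  have "real (l - 1) < c" using lc cpos l1 by linarith
  then have "10 powr real (l - 1) < real N" unfolding c_def using Npos by (subst (asm) less_log_iff) auto
  then have "10 ^ (l - 1) < real N" by (simp add: powr_realpow)
  then have Nlo: "10 ^ (l - 1) < N" by (metis of_nat_less_iff of_nat_numeral of_nat_power)
  define T where "T = nat t"
  have tT: "t = int T" using assms(5) T_def by simp
  have dpos: "real d > 0" using assms(2) by simp
  have "real_of_int t \<le> (10 ^ (l - 1) - real u0) / real d" using t_def S0 by simp
  then have "real T * real d \<le> 10 ^ (l - 1) - real u0" using dpos tT by (simp add: pos_le_divide_eq)
  then have "real (u0 + T * d) \<le> real (10 ^ (l - 1))" by simp
  then have Ut: "U u0 d T \<le> 10 ^ (l - 1)" unfolding U_def by (simp only: of_nat_le_iff)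
  have "(10 ^ (l - 1) - real u0) / real d < real_of_int t + 1" unfolding t_def S0 by (rule real_of_int_floor_add_one_gt)
  then have "10 ^ (l - 1) - real u0 < (real T + 1) * real d" using dpos tT by (simp add: pos_divide_less_eq)
  then have "real (10 ^ (l - 1)) < real (u0 + (T + 1) * d)" by (simp add: algebra_simps)
  then have lo: "10 ^ (l - 1) < U u0 d (T + 1)" unfolding U_def by (simp only: of_nat_less_iff)
  have "T * d < n * d + 1" using Ut Nlo unfolding U_def N_def by linarith
  then have "T * d \<le> n * d" by (simp add: less_Suc_eq_le)
  then have Tn: "T \<le> n" using assms(2) by simp
  define m where "m = n - T"
  have nm: "n = T + m" using Tn m_def by simp
  have Un: "U u0 d (T + m) < 10 ^ l" using Nhi nm unfolding U_def N_def by simp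
  define x :: real where "x = 10 ^ l"
  define a where "a = real (U u0 d T)"
  define p where "p = ndigits (S u0 d T)"
  define A where "A = real (S u0 d T) - 10 ^ p * (a * (x - 1) - d) / (x - 1)\<^sup>2"
  define B where "B = 10 ^ p * (a * (x - 1) - d) / (x - 1)\<^sup>2"
  define C where "C = real d * 10 ^ p / (x - 1)"
  have cl: "\<And>k. U u0 d (T + k) < 10 ^ l \<Longrightarrow> real (S u0 d (T + k)) = A + (B + C * k) * x ^ k"
    using closed[OF l1 lo] unfolding A_def B_def C_def x_def a_def p_def by blast
  have "(1::real) < 10 ^ l" using l1 by (intro one_less_power) auto
  then have x1: "x - 1 \<noteq> 0" unfolding x_def by simp
  have U1: "U u0 d (T + 1) < 10 ^ l" using assms(6) T_def unfolding U_def by simp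
  have U2: "U u0 d (T + 2) < 10 ^ l" using assms(6) T_def by simp
  have s0: "real (S u0 d T) = A + B" unfolding A_def B_def by simp
  have s1: "real (S u0 d (T + 1)) = A + (B + C) * x" using cl[OF U1] by simp
  have s2: "real (S u0 d (T + 2)) = A + (B + C * 2) * x ^ 2" using cl[OF U2] by simp
  have alpha: "(real (S u0 d (T + 2)) - 2 * 10 ^ l * real (S u0 d (T + 1)) + 10 ^ (2 * l) * real (S u0 d T)) / (10 ^ l - 1)\<^sup>2 = A"
    using alg2[OF x1 s0 s1 s2] unfolding x_def by (simp add: power_mult mult.commute)
  have pw: "(10::real) powi (int l * (int n - t)) = x ^ m"
  proof -
    have "int l * (int n - t) = int (l * m)" using nm tT by simp
    then show ?thesis unfolding x_def by (simp only: power_int_of_nat power_mult)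
  qed
  have Sn: "real (S u0 d n) = A + (B + C * m) * x ^ m" using cl[OF Un] nm by simp
  have mu: "((10 ^ l - 1) * real (U u0 d T) - real d) * 10 ^ p / (10 ^ l - 1)\<^sup>2 = B"
    unfolding B_def x_def a_def by (simp add: mult.commute)
  have th: "real d * 10 ^ p / (10 ^ l - 1) = C" unfolding C_def x_def by simp
  have rm: "real n - of_int t = real m" using nm tT by simp
  show ?thesis
    unfolding Let_def T_def[symmetric] p_def[symmetric] alpha mu th pw rm Sn
    by (simp add: algebra_simps)
qed
end
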